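(* Let $(\mathcal{X},d_{\mathcal{X}})$ and $(\mathcal{Y},d_{\mathcal{Y}})$ be metric spaces, let $(X,Y)\sim\mathbb{G}$ on $\mathcal{X}\times\mathcal{Y}$, and let $m$ be the conditional Fréchet mean function, $m(x)=\arg\min_{y\in\mathcal{Y}}\mathsf{E}[d_{\mathcal{Y}}(Y,y)^2\mid X=x]$, assumed to exist uniquely for $\mathbb{G}$-a.e. $x$. Assume: (i) $\mathcal{L}_n=\{(X_1,Y_1),\ldots,(X_n,Y_n)\}$ consists of $n$ i.i.d. copies of $(X,Y)$, independent of $(X,Y)$; (ii) the cumulative distribution function $F_R$ of $R=d_{\mathcal{Y}}(Y,m(X))$ is continuous on $\mathbb{R}$; (iii) $d_{\mathcal{Y}}(m(X_1),\widehat{m}_{(1)}(X_1))\to0$ in probability as $n\to\infty$. Then, as $n\to\infty$, $$\sup_{t\in\mathbb{R}}\big|F_{\widehat{R}^{\mathrm{oob}}_1,\ldots,\widehat{R}^{\mathrm{oob}}_n}(t)-F_R(t)\big|\to0$$ in probability. In particular, $F_R(\widehat{R}_{[1-\alpha,n]})\to 1-\alpha$ in probability for every $\alpha\in(0,1)$.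
   Context: $\widehat{m}$ denotes a random forest (more generally, a bagged regression estimator) trained on $\mathcal{L}_n$ from $B$ base estimators each built on a random resample of $\mathcal{L}_n$. For each $i$, the out-of-bag (OOB) estimator $\widehat{m}_{(i)}$ aggregates only those base estimators whose resample does not contain $(X_i,Y_i)$. The OOB errors are $\widehat{R}^{\mathrm{oob}}_i=d_{\mathcal{Y}}(Y_i,\widehat{m}_{(i)}(X_i))$; $F_{\widehat{R}^{\mathrm{oob}}_1,\ldots,\widehat{R}^{\mathrm{oob}}_n}$ is their empirical distribution function and $\widehat{R}_{[1-\alpha,n]}$ its $(1-\alpha)$-quantile. *)

theory Defs
  imports "HOL-Probability.Probability"
begin

text \<open>Conditional Frechet mean of Y given X for (X,Y) ~ G on 'x \<times> 'y:
  m x is, for G-a.e. x, the unique minimiser over y of E[d(Y,y)^2 | X = x],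
  where h y is a version of x \<mapsto> E[d(Y,y)^2 | X = x].\<close>
definition cond_frechet_mean :: "('x::metric_space \<times> 'y::metric_space) measure \<Rightarrow> ('x \<Rightarrow> 'y) \<Rightarrow> bool" where
  "cond_frechet_mean G m \<longleftrightarrow>
     m \<in> borel_measurable borel \<and>
     (\<exists>h :: 'y \<Rightarrow> 'x \<Rightarrow> ennreal.
        (\<forall>y. h y \<in> borel_measurable borel \<and>
             (AE p in G. h y (fst p) =
                nn_cond_exp G (vimage_algebra (space G) fst borel)
                  (\<lambda>q. ennreal ((dist (snd q) y)\<^sup>2)) p)) \<and>
        (AE x in distr G borel fst. \<forall>y. y \<noteq> m x \<longrightarrow> h (m x) x < h y x))"

text \<open>Probability space for sample size n: the sample L_n (coordinates 0..n-1 of the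
  first component, i.i.d. with law G) and, independently, B n i.i.d. pairs
  (resample index list, auxiliary randomisation of the base estimator).\<close>
definition bag_space :: "('x \<times> 'y) measure \<Rightarrow> (nat \<Rightarrow> nat) \<Rightarrow> (nat \<Rightarrow> nat list pmf)
     \<Rightarrow> (nat \<Rightarrow> 't measure) \<Rightarrow> nat
     \<Rightarrow> ((nat \<Rightarrow> 'x \<times> 'y) \<times> (nat \<Rightarrow> nat list \<times> 't)) measure" where
  "bag_space G B rs \<Theta> n =
     PiM {..<n} (\<lambda>_. G) \<Otimes>\<^sub>M PiM {..<B n} (\<lambda>_. measure_pmf (rs n) \<Otimes>\<^sub>M \<Theta> n)"

definition oob :: "(nat \<Rightarrow> ('x \<times> 'y) list \<Rightarrow> 't \<Rightarrow> 'e) \<Rightarrow> (nat \<Rightarrow> 'e list \<Rightarrow> 'x \<Rightarrow> 'y)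
     \<Rightarrow> (nat \<Rightarrow> nat) \<Rightarrow> nat \<Rightarrow> (nat \<Rightarrow> 'x \<times> 'y) \<times> (nat \<Rightarrow> nat list \<times> 't) \<Rightarrow> nat \<Rightarrow> 'x \<Rightarrow> 'y" where
  "oob base agg B n \<omega> i =
     agg n [base n (map (fst \<omega>) (fst (snd \<omega> b))) (snd (snd \<omega> b)).
              b \<leftarrow> [0..<B n], i \<notin> set (fst (snd \<omega> b))]"

definition oob_res where
  "oob_res base agg B n \<omega> i =
     dist (snd (fst \<omega> i)) (oob base agg B n \<omega> i (fst (fst \<omega> i)))"

definition ecdf :: "nat \<Rightarrow> (nat \<Rightarrow> real) \<Rightarrow> real \<Rightarrow> real" where
  "ecdf n r t = real (card {i. i < n \<and> r i \<le> t}) / real n"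

definition quantile :: "(real \<Rightarrow> real) \<Rightarrow> real \<Rightarrow> real" where
  "quantile F p = Inf {t. p \<le> F t}"

definition to_zero_in_prob :: "(nat \<Rightarrow> 'a measure) \<Rightarrow> (nat \<Rightarrow> 'a \<Rightarrow> real) \<Rightarrow> bool" where
  "to_zero_in_prob P Z \<longleftrightarrow>
     (\<forall>e>0. (\<lambda>n. measure (P n) {\<omega> \<in> space (P n). \<bar>Z n \<omega>\<bar> > e}) \<longlonglongrightarrow> 0)"

end

theory Submission
  imports Defs "HOL-Probability.Probability"
begin
lemma distr_PiM_coord:
  fixes M :: "'a measure"
  assumes "prob_space M" "finite I" "h \<in> measurable M M" "distr M M h = M"
  shows "distr (PiM I (\<lambda>_. M)) (PiM I (\<lambda>_. M)) (\<lambda>\<omega>. \<lambda>i\<in>I. h (\<omega> i)) = PiM I (\<lambda>_. M)"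
proof -
  interpret prob_space M by fact
  interpret product_sigma_finite "\<lambda>_. M" by unfold_locales
  have hm: "(\<lambda>\<omega>. \<lambda>i\<in>I. h (\<omega> i)) \<in> measurable (PiM I (\<lambda>_. M)) (PiM I (\<lambda>_. M))"
    using assms(3) by measurable
  show ?thesis
  proof (rule PiM_eqI)
    fix A assume A: "\<And>i. i \<in> I \<Longrightarrow> A i \<in> sets M"
    have pre: "(\<lambda>\<omega>. \<lambda>i\<in>I. h (\<omega> i)) -` Pi\<^sub>E I A \<inter> space (PiM I (\<lambda>_. M)) = Pi\<^sub>E I (\<lambda>i. h -` A i \<inter> space M)"
      using assms(3) by (auto simp: space_PiM PiE_iff measurable_space)
    have eqm: "emeasure M (h -` A i \<inter> space M) = emeasure M (A i)" if "i \<in> I" for i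
      using A[OF that] assms(3,4) by (metis emeasure_distr)
    show "emeasure (distr (PiM I (\<lambda>_. M)) (PiM I (\<lambda>_. M)) (\<lambda>\<omega>. \<lambda>i\<in>I. h (\<omega> i))) (Pi\<^sub>E I A) = (\<Prod>i\<in>I. emeasure M (A i))"
    proof -
      have "emeasure (distr (PiM I (\<lambda>_. M)) (PiM I (\<lambda>_. M)) (\<lambda>\<omega>. \<lambda>i\<in>I. h (\<omega> i))) (Pi\<^sub>E I A)
          = emeasure (PiM I (\<lambda>_. M)) ((\<lambda>\<omega>. \<lambda>i\<in>I. h (\<omega> i)) -` Pi\<^sub>E I A \<inter> space (PiM I (\<lambda>_. M)))"
        using A assms(2) hm by (intro emeasure_distr) (auto intro!: sets_PiM_I_finite)
      also have "\<dots> = (\<Prod>i\<in>I. emeasure M (h -` A i \<inter> space M))"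
        unfolding pre using A assms(3) assms(2) by (intro emeasure_PiM) (auto intro!: measurable_sets)
      also have "\<dots> = (\<Prod>i\<in>I. emeasure M (A i))"
        using eqm by (rule prod.cong[OF refl])
      finally show ?thesis .
    qed
  qed (use assms in auto)
qed

locale oobset =
  fixes G :: "('x::metric_space \<times> 'y::metric_space) measure"
    and m :: "'x \<Rightarrow> 'y"
    and B :: "nat \<Rightarrow> nat"
    and rs :: "nat \<Rightarrow> nat list pmf"
    and \<Theta> :: "nat \<Rightarrow> 't measure"
    and base :: "nat \<Rightarrow> ('x \<times> 'y) list \<Rightarrow> 't \<Rightarrow> 'e"
    and agg :: "nat \<Rightarrow> 'e list \<Rightarrow> 'x \<Rightarrow> 'y"
    and F :: "real \<Rightarrow> real"
  assumes G: "prob_space G"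
    and Theta: "\<And>n. prob_space (\<Theta> n)"
    and rs_exch: "\<And>n \<pi>. bij_betw \<pi> {..<n} {..<n} \<Longrightarrow> map_pmf (map \<pi>) (rs n) = rs n"
    and R_meas: "(\<lambda>p. dist (snd p) (m (fst p))) \<in> borel_measurable G"
    and F_def: "\<And>t. F t = measure G {p \<in> space G. dist (snd p) (m (fst p)) \<le> t}"
    and F_cont: "continuous_on UNIV F"
    and dist_meas: "\<And>n i. i < n \<Longrightarrow>
          (\<lambda>\<omega>. dist (m (fst (fst \<omega> i))) (oob base agg B n \<omega> i (fst (fst \<omega> i))))
            \<in> borel_measurable (bag_space G B rs \<Theta> n)"
    and consistent: "to_zero_in_prob (bag_space G B rs \<Theta>)
          (\<lambda>n \<omega>. dist (m (fst (fst \<omega> 0))) (oob base agg B n \<omega> 0 (fst (fst \<omega> 0))))"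
begin

abbreviation "P n \<equiv> bag_space G B rs \<Theta> n"
abbreviation "A n \<equiv> PiM {..<n} (\<lambda>_. G)"
abbreviation "Mb n \<equiv> measure_pmf (rs n) \<Otimes>\<^sub>M \<Theta> n"
abbreviation "C n \<equiv> PiM {..<B n} (\<lambda>_. Mb n)"
definition "D n \<omega> i = dist (m (fst (fst \<omega> i))) (oob base agg B n \<omega> i (fst (fst \<omega> i)))"

lemma P_eq: "P n = A n \<Otimes>\<^sub>M C n" unfolding bag_space_def ..

lemma prob_Mb: "prob_space (Mb n)"
  by (intro prob_space_pair Theta measure_pmf.prob_space_axioms)

lemma prob_A: "prob_space (A n)" using G by (intro prob_space_PiM) auto
lemma prob_C: "prob_space (C n)" using prob_Mb by (intro prob_space_PiM) auto
lemma prob_P: "prob_space (P n)"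
  unfolding P_eq by (intro prob_space_pair prob_A prob_C)

lemma space_P: "space (P n) = space (A n) \<times> space (C n)"
  unfolding P_eq by (simp add: space_pair_measure)

lemma exch:
  assumes i: "i < n"
  shows "measure (P n) {\<omega>\<in>space (P n). D n \<omega> i > e} = measure (P n) {\<omega>\<in>space (P n). D n \<omega> 0 > e}"
proof -
  define \<pi> where "\<pi> = (\<lambda>j::nat. if j = 0 then i else if j = i then 0 else j)"
  have pp: "\<pi> (\<pi> j) = j" for j unfolding \<pi>_def by auto
  have pn: "\<pi> j < n \<longleftrightarrow> j < n" for j using i unfolding \<pi>_def by auto
  have bij: "bij_betw \<pi> {..<n} {..<n}"
    by (rule bij_betwI[where g=\<pi>]) (auto simp: pp pn)
  define h where "h = (\<lambda>(l::nat list, t::'t). (map \<pi> l, t))"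
  define f where "f = (\<lambda>x::nat \<Rightarrow> 'x \<times> 'y. \<lambda>j\<in>{..<n}. x (\<pi> j))"
  define g where "g = (\<lambda>y. \<lambda>b\<in>{..<B n}. h (y b))"
  define T where "T = (\<lambda>\<omega>. (f (fst \<omega>), g (snd \<omega>)))"
  have hm: "h \<in> measurable (Mb n) (Mb n)"
    unfolding h_def by (auto intro!: measurable_Pair simp: split_beta')
  have fm: "f \<in> measurable (A n) (A n)"
    unfolding f_def using pn by measurable (auto simp: pn)
  have gm: "g \<in> measurable (C n) (C n)"
    unfolding g_def using hm by measurable
  have distrA: "distr (A n) (A n) f = A n"
  proof -
    have "distr (A n) (A n) f = distr (A n) (\<Pi>\<^sub>M j\<in>{..<n}. (\<lambda>_. G) (\<pi> j)) (\<lambda>\<omega>. \<lambda>j\<in>{..<n}. \<omega> (\<pi> j))"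
      unfolding f_def by simp
    also have "\<dots> = (\<Pi>\<^sub>M j\<in>{..<n}. (\<lambda>_. G) (\<pi> j))"
      using G bij pn by (intro distr_PiM_reindex) (auto simp: bij_betw_def)
    finally show ?thesis by simp
  qed
  have distrMb: "distr (Mb n) (Mb n) h = Mb n"
  proof -
    have r: "distr (measure_pmf (rs n)) (measure_pmf (rs n)) (map \<pi>) = measure_pmf (rs n)"
    proof -
      have "distr (measure_pmf (rs n)) (measure_pmf (rs n)) (map \<pi>) = distr (measure_pmf (rs n)) (count_space UNIV) (map \<pi>)"
        by (rule distr_cong) auto
      also have "\<dots> = measure_pmf (map_pmf (map \<pi>) (rs n))" by (simp add: map_pmf_rep_eq)
      finally show ?thesis using rs_exch[OF bij] by simp
    qed
    have "distr (measure_pmf (rs n)) (measure_pmf (rs n)) (map \<pi>) \<Otimes>\<^sub>M distr (\<Theta> n) (\<Theta> n) id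
        = distr (Mb n) (Mb n) (\<lambda>(x, y). (map \<pi> x, id y))"
      using Theta[of n] by (intro pair_measure_distr) (auto simp: prob_space_imp_sigma_finite id_def)
    then show ?thesis using r by (simp add: h_def id_def)
  qed
  have distrC: "distr (C n) (C n) g = C n"
    unfolding g_def using prob_Mb hm distrMb by (intro distr_PiM_coord) auto
  have distrP: "distr (P n) (P n) T = P n"
  proof -
    have "distr (A n) (A n) f \<Otimes>\<^sub>M distr (C n) (C n) g = distr (A n \<Otimes>\<^sub>M C n) (A n \<Otimes>\<^sub>M C n) (\<lambda>(x, y). (f x, g y))"
      using fm gm prob_C by (intro pair_measure_distr) (auto simp: distrC prob_space_imp_sigma_finite)
    then show ?thesis unfolding P_eq T_def distrA distrC by (simp add: split_beta')
  qed
  have Tm: "T \<in> measurable (P n) (P n)"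
    unfolding P_eq T_def using fm gm by measurable
  have fT: "fst (T \<omega>) j = fst \<omega> (\<pi> j)" if "\<omega> \<in> space (P n)" for \<omega> j
  proof (cases "j < n")
    case False
    then have "\<pi> j = j" using i unfolding \<pi>_def by auto
    moreover have "fst \<omega> j = undefined" using that False by (auto simp: space_P space_PiM PiE_def extensional_def)
    ultimately show ?thesis using False by (simp add: T_def f_def)
  qed (simp add: T_def f_def)
  have key: "D n (T \<omega>) 0 = D n \<omega> i" if w: "\<omega> \<in> space (P n)" for \<omega>
  proof -
    have o: "oob base agg B n (T \<omega>) 0 = oob base agg B n \<omega> i"
    proof -
      have "0 \<in> set (map \<pi> l) \<longleftrightarrow> i \<in> set l" for l
        by (auto simp: \<pi>_def split: if_splits)
      moreover have "fst (T \<omega>) \<circ> \<pi> = fst \<omega>"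
        using fT[OF w] by (simp add: pp fun_eq_iff)
      moreover have "snd (T \<omega>) b = (map \<pi> (fst (snd \<omega> b)), snd (snd \<omega> b))" if "b < B n" for b
        using that by (simp add: T_def g_def h_def split_beta')
      ultimately show ?thesis unfolding oob_def
        by (intro arg_cong[where f="agg n"] arg_cong[where f=concat] map_cong) auto
    qed
    show ?thesis unfolding D_def o fT[OF w] by (simp add: \<pi>_def)
  qed
  have [measurable]: "(\<lambda>\<omega>. D n \<omega> 0) \<in> borel_measurable (P n)"
    unfolding D_def using dist_meas i by simp
  have "measure (P n) {\<omega>\<in>space (P n). D n \<omega> 0 > e} = measure (distr (P n) (P n) T) {\<omega>\<in>space (P n). D n \<omega> 0 > e}"
    by (simp add: distrP)
  also have "\<dots> = measure (P n) (T -` {\<omega>\<in>space (P n). D n \<omega> 0 > e} \<inter> space (P n))"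
    using Tm by (intro measure_distr) auto
  also have "T -` {\<omega>\<in>space (P n). D n \<omega> 0 > e} \<inter> space (P n) = {\<omega>\<in>space (P n). D n \<omega> i > e}"
    using key measurable_space[OF Tm] by auto
  finally show ?thesis by simp
qed

lemma card_sum_ind: "finite I \<Longrightarrow> real (card {i\<in>I. Q i}) = (\<Sum>i\<in>I. if Q i then 1 else 0)"
  by (simp add: sum.If_cases Int_def conj_commute)

lemma frac_bound:
  fixes d :: real
  assumes n: "0 < n" and d: "0 < d"
  shows "measure (P n) {\<omega>\<in>space (P n). real (card {i\<in>{..<n}. D n \<omega> i > e}) \<ge> d * n}
    \<le> measure (P n) {\<omega>\<in>space (P n). D n \<omega> 0 > e} / d"
proof -
  interpret p: prob_space "P n" by (rule prob_P)
  define S where "S i = {\<omega>\<in>space (P n). D n \<omega> i > e}" for i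
  have [measurable]: "i < n \<Longrightarrow> (\<lambda>\<omega>. D n \<omega> i) \<in> borel_measurable (P n)" for i
    unfolding D_def using dist_meas by simp
  have Ss: "i < n \<Longrightarrow> S i \<in> sets (P n)" for i unfolding S_def by measurable
  define u where "u \<omega> = (\<Sum>i<n. indicator (S i) \<omega> :: real)" for \<omega>
  have ui: "integrable (P n) u" unfolding u_def using Ss by (intro Bochner_Integration.integrable_sum) (auto intro!: p.integrable_const_bound[where B=1] simp: indicator_def)
  have "integral\<^sup>L (P n) u = (\<Sum>i<n. measure (P n) (S i))"
    unfolding u_def using Ss by (subst Bochner_Integration.integral_sum) (auto intro!: sum.cong p.integrable_const_bound[where B=1] simp: indicator_def)
  also have "\<dots> = (\<Sum>i<n. measure (P n) (S 0))"
    unfolding S_def by (intro sum.cong refl exch) auto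
  also have "\<dots> = n * measure (P n) (S 0)" by simp
  finally have iu: "integral\<^sup>L (P n) u = n * measure (P n) (S 0)" .
  have "{\<omega>\<in>space (P n). real (card {i\<in>{..<n}. D n \<omega> i > e}) \<ge> d * n} = {\<omega>\<in>space (P n). u \<omega> \<ge> d * n}"
  proof -
    have "real (card {i\<in>{..<n}. D n \<omega> i > e}) = u \<omega>" if "\<omega> \<in> space (P n)" for \<omega>
      unfolding card_sum_ind[OF finite_lessThan] u_def using that by (intro sum.cong) (auto simp: S_def)
    then show ?thesis by auto
  qed
  also have "measure (P n) \<dots> \<le> integral\<^sup>L (P n) u / (d * n)"
    using ui d n by (intro integral_Markov_inequality_measure[where A="space (P n)"]) (auto simp: intro!: sum_nonneg simp: u_def[symmetric], simp add: u_def sum_nonneg)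
  also have "\<dots> = measure (P n) (S 0) / d" using n by (simp add: iu)
  finally show ?thesis by (simp add: S_def)
qed

lemma indep_coords:
  assumes "prob_space M" "finite I" "I \<noteq> {}"
  shows "prob_space.indep_vars (PiM I (\<lambda>_. M)) (\<lambda>_. M) (\<lambda>i x. x i) I"
proof -
  interpret p: prob_space "PiM I (\<lambda>_. M)" using assms by (intro prob_space_PiM) auto
  have "distr (PiM I (\<lambda>_. M)) (PiM I (\<lambda>_. M)) (\<lambda>x. \<lambda>i\<in>I. x i) = distr (PiM I (\<lambda>_. M)) (PiM I (\<lambda>_. M)) (\<lambda>x. x)"
    by (rule distr_cong) (auto simp: space_PiM PiE_def extensional_restrict)
  also have "\<dots> = PiM I (\<lambda>_. M)" by simp
  also have "\<dots> = PiM I (\<lambda>i. distr (PiM I (\<lambda>_. M)) M (\<lambda>x. x i))"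
    using assms by (intro PiM_cong refl) (auto intro!: distr_PiM_component[symmetric])
  finally show ?thesis using assms by (subst p.indep_vars_iff_distr_eq_PiM') (auto intro!: measurable_component_singleton)
qed

definition "R p = dist (snd p) (m (fst p))"

lemma R_meas'[measurable]: "R \<in> borel_measurable G"
  using R_meas unfolding R_def by simp

lemma transfer_fst:
  assumes "S \<in> sets (A n)"
  shows "measure (P n) {\<omega>\<in>space (P n). fst \<omega> \<in> S} = measure (A n) S"
proof -
  interpret c: prob_space "C n" by (rule prob_C)
  have "measure (A n) S = measure (distr (P n) (A n) fst) S"
    unfolding P_eq c.distr_pair_fst ..
  also have "\<dots> = measure (P n) (fst -` S \<inter> space (P n))"
    using assms unfolding P_eq by (intro measure_distr) auto
  finally show ?thesis by (simp add: Int_def conj_commute)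
qed

lemma wlln_A:
  fixes \<eta> :: real and n :: nat
  assumes n: "0 < n" and eta: "0 < \<eta>"
  shows "measure (A n) {x\<in>space (A n). \<bar>(\<Sum>i<n. if R (x i) \<le> s then 1 else 0) - n * F s\<bar> \<ge> n * \<eta>}
     \<le> 2 * exp (-2 * n * \<eta>\<^sup>2)"
proof -
  interpret a: prob_space "A n" by (rule prob_A)
  define X where "X i x = (if R (x i) \<le> s then 1 else 0 :: real)" for i and x :: "nat \<Rightarrow> 'x \<times> 'y"
  have ind: "a.indep_vars (\<lambda>_. borel) X {..<n}"
  proof -
    have "a.indep_vars (\<lambda>_. borel) (\<lambda>i x. (\<lambda>i p. if R p \<le> s then 1 else 0 :: real) i ((\<lambda>i x. x i) i x)) {..<n}"
    proof (rule a.indep_vars_compose2[where M'="\<lambda>_. G"])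
      show "a.indep_vars (\<lambda>_. G) (\<lambda>i x. x i) {..<n}"
        using n by (intro indep_coords[OF G]) auto
      show "(\<lambda>p. if R p \<le> s then 1 else 0 :: real) \<in> measurable G borel" for i
        by measurable
    qed
    then show ?thesis unfolding X_def by simp
  qed
  have EX: "a.expectation (X i) = F s" if "i < n" for i
  proof -
    have "a.expectation (X i) = integral\<^sup>L (distr (A n) G (\<lambda>x. x i)) (\<lambda>p. if R p \<le> s then 1 else 0 :: real)"
      unfolding X_def using that by (subst integral_distr) simp_all
    also have "\<dots> = integral\<^sup>L G (indicator {p\<in>space G. R p \<le> s})"
    proof -
      have dG: "distr (A n) G (\<lambda>x. x i) = G" using G that by (intro distr_PiM_component) auto
      show ?thesis unfolding dG by (rule Bochner_Integration.integral_cong) (simp_all add: indicator_def)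
    qed
    also have "\<dots> = F s"
    proof -
      interpret g: prob_space G by (rule G)
      have "{p\<in>space G. R p \<le> s} \<in> sets G" by measurable
      then have "integral\<^sup>L G (indicator {p\<in>space G. R p \<le> s}) = measure G {p\<in>space G. R p \<le> s}"
        by (simp add: Int_absorb2)
      then show ?thesis by (simp add: F_def R_def)
    qed
    finally show ?thesis .
  qed
  interpret H: Hoeffding_ineq "A n" "{..<n}" X "\<lambda>_. 0" "\<lambda>_. 1" "\<Sum>i<n. a.expectation (X i)"
    by unfold_locales (simp_all add: ind X_def)
  have "a.prob {x\<in>space (A n). \<bar>(\<Sum>i<n. X i x) - (\<Sum>i<n. a.expectation (X i))\<bar> \<ge> n * \<eta>}
        \<le> 2 * exp (-2 * (n * \<eta>)\<^sup>2 / (\<Sum>i<n. (1 - 0)\<^sup>2))"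
    using n eta by (intro H.Hoeffding_ineq_abs_ge) auto
  also have "-2 * (n * \<eta>)\<^sup>2 / (\<Sum>i<n. (1 - 0)\<^sup>2) = -2 * n * \<eta>\<^sup>2"
    using n by (simp add: power2_eq_square)
  also have "(\<Sum>i<n. a.expectation (X i)) = n * F s" using EX by simp
  finally show ?thesis by (simp add: X_def)
qed

definition "negl E \<longleftrightarrow> eventually (\<lambda>n. E n \<in> sets (P n)) sequentially \<and> (\<lambda>n. measure (P n) (E n)) \<longlonglongrightarrow> 0"
definition "smallp Z \<longleftrightarrow> (\<exists>E. negl E \<and> eventually (\<lambda>n. {\<omega>\<in>space (P n). Z n \<omega>} \<subseteq> E n) sequentially)"

lemma negl_bound:
  assumes "eventually (\<lambda>n. E n \<in> sets (P n)) sequentially"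
    and "eventually (\<lambda>n. measure (P n) (E n) \<le> b n) sequentially" and "b \<longlonglongrightarrow> 0"
  shows "negl E"
  unfolding negl_def
proof (intro conjI assms(1))
  show "(\<lambda>n. measure (P n) (E n)) \<longlonglongrightarrow> 0"
  proof (rule tendsto_sandwich[where f="\<lambda>_. 0" and h=b])
    show "\<forall>\<^sub>F n in sequentially. 0 \<le> measure (P n) (E n)" by (simp add: measure_nonneg)
  qed (use assms in simp_all)
qed

lemma negl_Un:
  assumes "negl E1" "negl E2" shows "negl (\<lambda>n. E1 n \<union> E2 n)"
proof -
  have m1: "eventually (\<lambda>n. E1 n \<in> sets (P n)) sequentially" and t1: "(\<lambda>n. measure (P n) (E1 n)) \<longlonglongrightarrow> 0"
    using assms(1) unfolding negl_def by auto
  have m2: "eventually (\<lambda>n. E2 n \<in> sets (P n)) sequentially" and t2: "(\<lambda>n. measure (P n) (E2 n)) \<longlonglongrightarrow> 0"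
    using assms(2) unfolding negl_def by auto
  show ?thesis
  proof (rule negl_bound[where b="\<lambda>n. measure (P n) (E1 n) + measure (P n) (E2 n)"])
    show "eventually (\<lambda>n. E1 n \<union> E2 n \<in> sets (P n)) sequentially"
      using eventually_conj[OF m1 m2] by eventually_elim blast
    show "eventually (\<lambda>n. measure (P n) (E1 n \<union> E2 n) \<le> measure (P n) (E1 n) + measure (P n) (E2 n)) sequentially"
      using eventually_conj[OF m1 m2] by eventually_elim (rule measure_Un_le; blast)
    show "(\<lambda>n. measure (P n) (E1 n) + measure (P n) (E2 n)) \<longlonglongrightarrow> 0"
      using tendsto_add[OF t1 t2] by simp
  qed
qed

lemma smallp_disj:
  assumes "smallp Z1" "smallp Z2" shows "smallp (\<lambda>n \<omega>. Z1 n \<omega> \<or> Z2 n \<omega>)"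
proof -
  obtain E1 where E1: "negl E1" "eventually (\<lambda>n. {\<omega>\<in>space (P n). Z1 n \<omega>} \<subseteq> E1 n) sequentially"
    using assms(1) unfolding smallp_def by blast
  obtain E2 where E2: "negl E2" "eventually (\<lambda>n. {\<omega>\<in>space (P n). Z2 n \<omega>} \<subseteq> E2 n) sequentially"
    using assms(2) unfolding smallp_def by blast
  have "eventually (\<lambda>n. {\<omega>\<in>space (P n). Z1 n \<omega> \<or> Z2 n \<omega>} \<subseteq> E1 n \<union> E2 n) sequentially"
    using eventually_conj[OF E1(2) E2(2)] by eventually_elim blast
  then show ?thesis unfolding smallp_def using negl_Un[OF E1(1) E2(1)] by blast
qed

lemma smallp_mono:
  assumes "smallp Z" "eventually (\<lambda>n. \<forall>\<omega>\<in>space (P n). Z' n \<omega> \<longrightarrow> Z n \<omega>) sequentially"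
  shows "smallp Z'"
proof -
  from assms(1) obtain E where E: "negl E" "eventually (\<lambda>n. {\<omega>\<in>space (P n). Z n \<omega>} \<subseteq> E n) sequentially"
    unfolding smallp_def by blast
  have "eventually (\<lambda>n. {\<omega>\<in>space (P n). Z' n \<omega>} \<subseteq> E n) sequentially"
    using eventually_conj[OF E(2) assms(2)] by eventually_elim blast
  then show ?thesis unfolding smallp_def using E(1) by blast
qed

lemma smallp_finite_ex:
  assumes "finite S" "\<And>s. s \<in> S \<Longrightarrow> smallp (Z s)"
  shows "smallp (\<lambda>n \<omega>. \<exists>s\<in>S. Z s n \<omega>)"
  using assms
proof (induction S rule: finite_induct)
  case empty
  have "negl (\<lambda>_. {})" by (rule negl_bound[where b="\<lambda>_. 0"]) simp_all
  then show ?case unfolding smallp_def by auto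
next
  case (insert x F)
  have "smallp (\<lambda>n \<omega>. Z x n \<omega> \<or> (\<exists>s\<in>F. Z s n \<omega>))"
    using insert by (intro smallp_disj) simp_all
  then show ?case by (rule smallp_mono) simp
qed

lemma measure_le_superset:
  assumes "E \<in> sets (P n)" "S \<subseteq> E"
  shows "measure (P n) S \<le> measure (P n) E"
proof (cases "S \<in> sets (P n)")
  case True
  interpret prob_space "P n" by (rule prob_P)
  show ?thesis using True assms by (intro finite_measure_mono) auto
next
  case False
  then show ?thesis by (simp add: measure_notin_sets measure_nonneg)
qed

lemma smallp_to_zero:
  assumes "\<And>\<eta>. \<eta> > 0 \<Longrightarrow> smallp (\<lambda>n \<omega>. \<bar>Z n \<omega>\<bar> > \<eta>)"
  shows "to_zero_in_prob P Z"
  unfolding to_zero_in_prob_def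
proof (intro allI impI)
  fix e :: real assume "e > 0"
  from assms[OF this] obtain E where E: "negl E" "eventually (\<lambda>n. {\<omega>\<in>space (P n). \<bar>Z n \<omega>\<bar> > e} \<subseteq> E n) sequentially"
    unfolding smallp_def by blast
  have m: "eventually (\<lambda>n. E n \<in> sets (P n)) sequentially" and t: "(\<lambda>n. measure (P n) (E n)) \<longlonglongrightarrow> 0"
    using E(1) unfolding negl_def by auto
  have ev: "eventually (\<lambda>n. measure (P n) {\<omega>\<in>space (P n). \<bar>Z n \<omega>\<bar> > e} \<le> measure (P n) (E n)) sequentially"
    using eventually_conj[OF E(2) m] by eventually_elim (rule measure_le_superset; blast)
  show "(\<lambda>n. measure (P n) {\<omega>\<in>space (P n). \<bar>Z n \<omega>\<bar> > e}) \<longlonglongrightarrow> 0"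
    by (rule tendsto_sandwich[where f="\<lambda>_. 0" and h="\<lambda>n. measure (P n) (E n)"]) (simp_all add: measure_nonneg ev t)
qed

lemma ecdf_sandwich:
  fixes r q d :: "nat \<Rightarrow> real"
  assumes n: "0 < n" and rq: "\<And>i. \<bar>r i - q i\<bar> \<le> d i"
  shows "ecdf n r s \<le> ecdf n q (s + e) + real (card {i. i < n \<and> d i > e}) / n"
    and "ecdf n q (s - e) \<le> ecdf n r s + real (card {i. i < n \<and> d i > e}) / n"
proof -
  have "card {i. i < n \<and> r i \<le> s} \<le> card ({i. i < n \<and> q i \<le> s + e} \<union> {i. i < n \<and> d i > e})"
    using rq by (intro card_mono) (auto, smt (verit))
  also have "\<dots> \<le> card {i. i < n \<and> q i \<le> s + e} + card {i. i < n \<and> d i > e}" by (rule card_Un_le)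
  finally have "real (card {i. i < n \<and> r i \<le> s}) \<le> real (card {i. i < n \<and> q i \<le> s + e}) + real (card {i. i < n \<and> d i > e})"
    by linarith
  then show "ecdf n r s \<le> ecdf n q (s + e) + real (card {i. i < n \<and> d i > e}) / n"
    using n unfolding ecdf_def by (simp add: add_divide_distrib[symmetric] divide_right_mono)
  have "card {i. i < n \<and> q i \<le> s - e} \<le> card ({i. i < n \<and> r i \<le> s} \<union> {i. i < n \<and> d i > e})"
    using rq by (intro card_mono) (auto, smt (verit))
  also have "\<dots> \<le> card {i. i < n \<and> r i \<le> s} + card {i. i < n \<and> d i > e}" by (rule card_Un_le)
  finally have "real (card {i. i < n \<and> q i \<le> s - e}) \<le> real (card {i. i < n \<and> r i \<le> s}) + real (card {i. i < n \<and> d i > e})"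
    by linarith
  then show "ecdf n q (s - e) \<le> ecdf n r s + real (card {i. i < n \<and> d i > e}) / n"
    using n unfolding ecdf_def by (simp add: add_divide_distrib[symmetric] divide_right_mono)
qed

lemma exp_seq_zero: "c > 0 \<Longrightarrow> (\<lambda>n::nat. 2 * exp (- c * real n)) \<longlonglongrightarrow> 0"
proof -
  assume c: "c > 0"
  have "(\<lambda>n::nat. exp (- c) ^ n) \<longlonglongrightarrow> 0" using c by (intro LIMSEQ_power_zero) simp
  moreover have "exp (- c) ^ n = exp (- c * real n)" for n
  proof -
    have "exp (- c) ^ n = exp (real n * (- c))" by (rule exp_of_nat_mult[symmetric])
    also have "real n * (- c) = - c * real n" by (rule mult.commute)
    finally show ?thesis .
  qed
  ultimately show ?thesis using tendsto_mult_right_zero[of _ sequentially 2] by simp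
qed

lemma negl_Gr:
  fixes \<eta> :: real
  assumes eta: "0 < \<eta>"
  shows "negl (\<lambda>n. {\<omega>\<in>space (P n). \<bar>ecdf n (\<lambda>i. R (fst \<omega> i)) s - F s\<bar> \<ge> \<eta>})"
proof (rule negl_bound[where b="\<lambda>n. 2 * exp (- (2 * \<eta>\<^sup>2) * real n)"])
  define S where "S n = {x\<in>space (A n). \<bar>(\<Sum>i<n. if R (x i) \<le> s then 1 else 0) - n * F s\<bar> \<ge> n * \<eta>}" for n :: nat
  have Sm: "S n \<in> sets (A n)" for n unfolding S_def by measurable
  have eq: "{\<omega>\<in>space (P n). \<bar>ecdf n (\<lambda>i. R (fst \<omega> i)) s - F s\<bar> \<ge> \<eta>} = {\<omega>\<in>space (P n). fst \<omega> \<in> S n}" if n: "n > 0" for n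
  proof -
    have "\<bar>ecdf n (\<lambda>i. R (x i)) s - F s\<bar> \<ge> \<eta> \<longleftrightarrow> \<bar>(\<Sum>i<n. if R (x i) \<le> s then 1 else 0) - n * F s\<bar> \<ge> n * \<eta>" for x
    proof -
      have c: "real (card {i. i < n \<and> R (x i) \<le> s}) = (\<Sum>i<n. if R (x i) \<le> s then 1 else 0)"
        using card_sum_ind[OF finite_lessThan[of n], of "\<lambda>i. R (x i) \<le> s"] by simp
      have e: "\<bar>(\<Sum>i<n. if R (x i) \<le> s then 1 else 0) - n * F s\<bar> = n * \<bar>ecdf n (\<lambda>i. R (x i)) s - F s\<bar>"
        using n unfolding ecdf_def c by (simp add: field_simps)
      have "\<eta> \<le> \<bar>ecdf n (\<lambda>i. R (x i)) s - F s\<bar> \<longleftrightarrow> n * \<eta> \<le> n * \<bar>ecdf n (\<lambda>i. R (x i)) s - F s\<bar>"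
        using n by simp
      then show ?thesis unfolding e .
    qed
    then show ?thesis unfolding S_def by (auto simp: space_P)
  qed
  show "eventually (\<lambda>n. {\<omega>\<in>space (P n). \<bar>ecdf n (\<lambda>i. R (fst \<omega> i)) s - F s\<bar> \<ge> \<eta>} \<in> sets (P n)) sequentially"
    using eventually_gt_at_top[of 0]
  proof eventually_elim
    case (elim n)
    have "{\<omega>\<in>space (P n). fst \<omega> \<in> S n} \<in> sets (P n)"
      unfolding P_eq using Sm by measurable
    then show ?case using eq[OF elim] by simp
  qed
  show "eventually (\<lambda>n. measure (P n) {\<omega>\<in>space (P n). \<bar>ecdf n (\<lambda>i. R (fst \<omega> i)) s - F s\<bar> \<ge> \<eta>} \<le> 2 * exp (- (2 * \<eta>\<^sup>2) * real n)) sequentially"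
    using eventually_gt_at_top[of 0]
  proof eventually_elim
    case (elim n)
    have "measure (P n) {\<omega>\<in>space (P n). fst \<omega> \<in> S n} = measure (A n) (S n)"
      using Sm by (rule transfer_fst)
    also have "\<dots> \<le> 2 * exp (-2 * n * \<eta>\<^sup>2)"
      unfolding S_def using elim eta by (rule wlln_A)
    finally show ?case using eq[OF elim] by (simp add: mult_ac)
  qed
  show "(\<lambda>n. 2 * exp (- (2 * \<eta>\<^sup>2) * real n)) \<longlonglongrightarrow> 0"
    using eta by (intro exp_seq_zero) simp
qed

lemma negl_Fr:
  fixes \<eta> e :: real
  assumes eta: "0 < \<eta>" and e: "0 < e"
  shows "negl (\<lambda>n. {\<omega>\<in>space (P n). real (card {i\<in>{..<n}. D n \<omega> i > e}) \<ge> \<eta> * n})"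
proof (rule negl_bound[where b="\<lambda>n. measure (P n) {\<omega>\<in>space (P n). D n \<omega> 0 > e} / \<eta>"])
  show "eventually (\<lambda>n. {\<omega>\<in>space (P n). real (card {i\<in>{..<n}. D n \<omega> i > e}) \<ge> \<eta> * n} \<in> sets (P n)) sequentially"
  proof (rule always_eventually, rule allI)
    fix n
    have [measurable]: "i < n \<Longrightarrow> (\<lambda>\<omega>. D n \<omega> i) \<in> borel_measurable (P n)" for i
      unfolding D_def using dist_meas by simp
    have fm: "(\<lambda>\<omega>. \<Sum>i<n. if D n \<omega> i > e then 1 else 0 :: real) \<in> borel_measurable (P n)"
      by (intro borel_measurable_sum) simp
    have "{\<omega>\<in>space (P n). (\<Sum>i<n. if D n \<omega> i > e then 1 else 0 :: real) \<ge> \<eta> * n} \<in> sets (P n)"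
      using fm by measurable
    moreover have "real (card {i\<in>{..<n}. D n \<omega> i > e}) = (\<Sum>i<n. if D n \<omega> i > e then 1 else 0 :: real)" for \<omega>
      by (rule card_sum_ind) simp
    ultimately show "{\<omega>\<in>space (P n). real (card {i\<in>{..<n}. D n \<omega> i > e}) \<ge> \<eta> * n} \<in> sets (P n)"
      by simp
  qed
  show "eventually (\<lambda>n. measure (P n) {\<omega>\<in>space (P n). real (card {i\<in>{..<n}. D n \<omega> i > e}) \<ge> \<eta> * n}
     \<le> measure (P n) {\<omega>\<in>space (P n). D n \<omega> 0 > e} / \<eta>) sequentially"
    using eventually_gt_at_top[of 0] by eventually_elim (rule frac_bound[OF _ eta])
  have "(\<lambda>n. measure (P n) {\<omega>\<in>space (P n). \<bar>dist (m (fst (fst \<omega> 0))) (oob base agg B n \<omega> 0 (fst (fst \<omega> 0)))\<bar> > e}) \<longlonglongrightarrow> 0"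
    using consistent e unfolding to_zero_in_prob_def by blast
  then have "(\<lambda>n. measure (P n) {\<omega>\<in>space (P n). D n \<omega> 0 > e}) \<longlonglongrightarrow> 0"
    unfolding D_def by simp
  then show "(\<lambda>n. measure (P n) {\<omega>\<in>space (P n). D n \<omega> 0 > e} / \<eta>) \<longlonglongrightarrow> 0"
    by (rule tendsto_divide_zero)
qed

lemma smallp_negl: "negl E \<Longrightarrow> smallp (\<lambda>n \<omega>. \<omega> \<in> E n)"
  unfolding smallp_def by (intro exI[of _ E] conjI always_eventually) auto

lemma res_tri: "\<bar>oob_res base agg B n \<omega> i - R (fst \<omega> i)\<bar> \<le> D n \<omega> i"
proof -
  let ?Y = "snd (fst \<omega> i)" and ?M = "m (fst (fst \<omega> i))" and ?O = "oob base agg B n \<omega> i (fst (fst \<omega> i))"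
  have "dist ?Y ?O \<le> dist ?Y ?M + dist ?M ?O" by (rule dist_triangle)
  moreover have "dist ?Y ?M \<le> dist ?Y ?O + dist ?O ?M" by (rule dist_triangle)
  moreover have "dist ?O ?M = dist ?M ?O" by (rule dist_commute)
  ultimately show ?thesis unfolding oob_res_def R_def D_def by linarith
qed

lemma smallp_Gh:
  fixes \<eta> :: real
  assumes eta: "0 < \<eta>"
  shows "smallp (\<lambda>n \<omega>. \<bar>ecdf n (oob_res base agg B n \<omega>) s - F s\<bar> > \<eta>)"
proof -
  obtain d where d: "d > 0" "\<And>x'. dist x' s < d \<Longrightarrow> dist (F x') (F s) < \<eta> / 3"
    using F_cont eta unfolding continuous_on_iff by (metis UNIV_I divide_pos_pos zero_less_numeral)
  define e where "e = d / 2"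
  have e: "e > 0" "\<bar>F (s + e) - F s\<bar> < \<eta> / 3" "\<bar>F (s - e) - F s\<bar> < \<eta> / 3"
    using d unfolding e_def by (auto simp: dist_real_def)
  let ?Z1 = "\<lambda>n \<omega>. \<omega> \<in> {\<omega>\<in>space (P n). \<bar>ecdf n (\<lambda>i. R (fst \<omega> i)) (s + e) - F (s + e)\<bar> \<ge> \<eta> / 3}"
  let ?Z2 = "\<lambda>n \<omega>. \<omega> \<in> {\<omega>\<in>space (P n). \<bar>ecdf n (\<lambda>i. R (fst \<omega> i)) (s - e) - F (s - e)\<bar> \<ge> \<eta> / 3}"
  let ?Z3 = "\<lambda>n \<omega>. \<omega> \<in> {\<omega>\<in>space (P n). real (card {i\<in>{..<n}. D n \<omega> i > e}) \<ge> \<eta> / 3 * n}"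
  have "smallp (\<lambda>n \<omega>. ?Z1 n \<omega> \<or> (?Z2 n \<omega> \<or> ?Z3 n \<omega>))"
    using eta e(1) by (intro smallp_disj smallp_negl negl_Gr negl_Fr) auto
  then show ?thesis
  proof (rule smallp_mono)
    show "eventually (\<lambda>n. \<forall>\<omega>\<in>space (P n). \<bar>ecdf n (oob_res base agg B n \<omega>) s - F s\<bar> > \<eta> \<longrightarrow>
        ?Z1 n \<omega> \<or> (?Z2 n \<omega> \<or> ?Z3 n \<omega>)) sequentially"
      using eventually_gt_at_top[of 0]
    proof eventually_elim
      case (elim n)
      show ?case
      proof (intro ballI impI, rule ccontr)
        fix \<omega> assume w: "\<omega> \<in> space (P n)" and gt: "\<bar>ecdf n (oob_res base agg B n \<omega>) s - F s\<bar> > \<eta>"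
          and no: "\<not> (?Z1 n \<omega> \<or> (?Z2 n \<omega> \<or> ?Z3 n \<omega>))"
        define c where "c = real (card {i. i < n \<and> D n \<omega> i > e}) / n"
        have n1: "\<bar>ecdf n (\<lambda>i. R (fst \<omega> i)) (s + e) - F (s + e)\<bar> < \<eta> / 3"
          and n2: "\<bar>ecdf n (\<lambda>i. R (fst \<omega> i)) (s - e) - F (s - e)\<bar> < \<eta> / 3"
          and n3: "real (card {i. i < n \<and> D n \<omega> i > e}) < \<eta> / 3 * n"
          using no w by auto
        have c: "c < \<eta> / 3" using n3 elim unfolding c_def by (simp add: field_simps)
        have s1: "ecdf n (oob_res base agg B n \<omega>) s \<le> ecdf n (\<lambda>i. R (fst \<omega> i)) (s + e) + c"
          and s2: "ecdf n (\<lambda>i. R (fst \<omega> i)) (s - e) \<le> ecdf n (oob_res base agg B n \<omega>) s + c"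
          unfolding c_def using elim res_tri by (intro ecdf_sandwich; blast)+
        show False using s1 s2 c n1 n2 e gt by linarith
      qed
    qed
  qed
qed

end

lemma grid_bound:
  fixes F g :: "real \<Rightarrow> real" and \<eta> b h :: real and K :: nat
  assumes Fm: "mono F" and gm: "mono g" and g01: "\<And>t. 0 \<le> g t \<and> g t \<le> 1"
    and F01: "\<And>t. 0 \<le> F t \<and> F t \<le> 1" and F0: "F (-1) = 0" and b: "b > -1" and Fb: "F b > 1 - \<eta> / 4"
    and K: "K > 0" and h: "h = (b + 1) / K"
    and uc: "\<And>x y. -1 \<le> x \<Longrightarrow> y \<le> b \<Longrightarrow> x \<le> y \<Longrightarrow> y - x \<le> h \<Longrightarrow> F y - F x < \<eta> / 4"
    and grid: "\<And>j. j \<le> K \<Longrightarrow> \<bar>g (-1 + real j * h) - F (-1 + real j * h)\<bar> \<le> \<eta> / 4"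
  shows "\<bar>g t - F t\<bar> \<le> \<eta> / 2"
proof -
  have hpos: "h > 0" using b K h by simp
  have sK: "-1 + real K * h = b" using K h by simp
  consider "t < -1" | "t \<ge> b" | "-1 \<le> t" "t < b" by linarith
  then show ?thesis
  proof cases
    case 1
    have "g t \<le> g (-1)" using 1 gm by (simp add: monoD)
    moreover have "\<bar>g (-1) - F (-1)\<bar> \<le> \<eta> / 4" using grid[of 0] by simp
    moreover have "F t \<le> F (-1)" using 1 Fm by (simp add: monoD)
    ultimately show ?thesis using F0 F01[of t] g01[of t] by linarith
  next
    case 2
    have "g b \<le> g t" using 2 gm by (simp add: monoD)
    moreover have "\<bar>g b - F b\<bar> \<le> \<eta> / 4" using grid[of K] sK by simp
    moreover have "F b \<le> F t" using 2 Fm by (simp add: monoD)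
    ultimately show ?thesis using Fb F01[of t] g01[of t] by linarith
  next
    case 3
    define x where "x = (t + 1) / h"
    define j where "j = nat \<lfloor>x\<rfloor>"
    have x0: "0 \<le> x" using 3 hpos unfolding x_def by simp
    have xK: "x < K" using 3 hpos K unfolding x_def h by (simp add: field_simps)
    have jx: "real j \<le> x" "x < real j + 1" unfolding j_def using x0 by linarith+
    have jK: "j < K" using jx xK by linarith
    define s0 where "s0 = -1 + real j * h"
    define s1 where "s1 = -1 + real (Suc j) * h"
    have s0t: "s0 \<le> t" using jx(1) hpos unfolding s0_def x_def by (simp add: field_simps)
    have ts1: "t < s1" using jx(2) hpos unfolding s1_def x_def by (simp add: field_simps)
    have s0m: "-1 \<le> s0" using hpos unfolding s0_def by simp
    have s1b: "s1 \<le> b"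
    proof -
      have "real (Suc j) \<le> real K" using jK by simp
      then have "real (Suc j) * h \<le> real K * h" using hpos by (intro mult_right_mono) auto
      then show ?thesis using sK unfolding s1_def by linarith
    qed
    have d: "s1 - s0 \<le> h" unfolding s0_def s1_def by (simp add: algebra_simps)
    have u: "F s1 - F s0 < \<eta> / 4" using uc[OF s0m s1b _ d] s0t ts1 by simp
    have g0: "\<bar>g s0 - F s0\<bar> \<le> \<eta> / 4" using grid[of j] jK unfolding s0_def by simp
    have g1: "\<bar>g s1 - F s1\<bar> \<le> \<eta> / 4" using grid[of "Suc j"] jK unfolding s1_def by simp
    have "g s0 \<le> g t" "g t \<le> g s1" "F s0 \<le> F t" "F t \<le> F s1"
      using s0t ts1 gm Fm by (simp_all add: monoD)
    then show ?thesis using u g0 g1 by linarith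
  qed
qed

lemma ecdf_mono: "mono (ecdf n r)"
  unfolding ecdf_def by (rule monoI, rule divide_right_mono) (auto intro!: card_mono)

lemma ecdf_01: "0 < n \<Longrightarrow> 0 \<le> ecdf n r t \<and> ecdf n r t \<le> 1"
proof -
  assume n: "0 < n"
  have "card {i. i < n \<and> r i \<le> t} \<le> card {..<n}" by (rule card_mono) auto
  then show ?thesis using n unfolding ecdf_def by (simp add: divide_le_eq_1)
qed

lemma ecdf_all: "0 < n \<Longrightarrow> (\<And>i. i < n \<Longrightarrow> r i \<le> t) \<Longrightarrow> ecdf n r t = 1"
proof -
  assume n: "0 < n" and a: "\<And>i. i < n \<Longrightarrow> r i \<le> t"
  then have "{i. i < n \<and> r i \<le> t} = {..<n}" by auto
  then show ?thesis using n unfolding ecdf_def by simp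
qed

lemma quantile_bound:
  fixes r :: "nat \<Rightarrow> real" and F :: "real \<Rightarrow> real"
  assumes n: "0 < n" and r0: "\<And>i. 0 \<le> r i" and p: "0 < p" "p < 1"
    and Fc: "continuous_on UNIV F" and S: "\<And>t. \<bar>ecdf n r t - F t\<bar> \<le> S"
  shows "\<bar>F (quantile (ecdf n r) p) - p\<bar> \<le> S"
proof -
  define Q where "Q = {t. p \<le> ecdf n r t}"
  define q where "q = Inf Q"
  have qq: "quantile (ecdf n r) p = q" unfolding q_def Q_def quantile_def ..
  define M where "M = Max (r ` {..<n})"
  have "ecdf n r M = 1" using n unfolding M_def by (intro ecdf_all) auto
  then have MQ: "M \<in> Q" using p unfolding Q_def by simp
  have Q0: "t \<in> Q \<Longrightarrow> 0 \<le> t" for t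
  proof (rule ccontr)
    assume "t \<in> Q" "\<not> 0 \<le> t"
    then have "{i. i < n \<and> r i \<le> t} = {}" using r0 by (auto, smt (verit) r0)
    then have "ecdf n r t = 0" unfolding ecdf_def by simp
    then show False using \<open>t \<in> Q\<close> p unfolding Q_def by simp
  qed
  have bdd: "bdd_below Q" using Q0 by (auto simp: bdd_below_def)
  have Qne: "Q \<noteq> {}" using MQ by auto
  have lower: "t \<in> Q \<Longrightarrow> q \<le> t" for t unfolding q_def using bdd by (intro cInf_lower)
  have qQ: "q \<in> Q"
  proof (rule ccontr)
    assume nq: "q \<notin> Q"
    then have lt: "ecdf n r q < p" unfolding Q_def by simp
    define V where "V = r ` {i. i < n \<and> r i > q}"
    have fV: "finite V" unfolding V_def by simp
    show False
    proof (cases "V = {}")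
      case True
      then have "ecdf n r q = 1" using n unfolding V_def by (intro ecdf_all) (auto simp: not_less[symmetric])
      then show False using lt p by simp
    next
      case False
      define v where "v = Min V"
      have vV: "v \<in> V" unfolding v_def using fV False by simp
      have vq: "v > q" using vV unfolding V_def by auto
      have vmin: "i < n \<Longrightarrow> r i > q \<Longrightarrow> v \<le> r i" for i unfolding v_def V_def using fV by (intro Min_le) auto
      have "v \<le> t" if t: "t \<in> Q" for t
      proof (rule ccontr)
        assume "\<not> v \<le> t"
        have "r i \<le> t \<longleftrightarrow> r i \<le> q" if "i < n" for i
        proof (cases "q < r i")
          case True then show ?thesis using vmin[OF that True] \<open>\<not> v \<le> t\<close> by linarith
        next
          case False then show ?thesis using lower[OF t] by linarith
        qed
        then have "{i. i < n \<and> r i \<le> t} = {i. i < n \<and> r i \<le> q}" by blast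
        then have "ecdf n r t = ecdf n r q" unfolding ecdf_def by simp
        then show False using t lt unfolding Q_def by simp
      qed
      then have "v \<le> q" unfolding q_def using Qne by (intro cInf_greatest) auto
      then show False using vq by simp
    qed
  qed
  have below: "t < q \<Longrightarrow> ecdf n r t < p" for t using lower[of t] unfolding Q_def by force
  have low: "p - S \<le> F q" using qQ S[of q] unfolding Q_def by simp
  have up: "F q \<le> p + S"
  proof (rule ccontr)
    assume "\<not> F q \<le> p + S"
    then have gt: "F q - (p + S) > 0" by simp
    from Fc gt obtain d where d: "d > 0" "\<And>x'. dist x' q < d \<Longrightarrow> dist (F x') (F q) < F q - (p + S)"
      unfolding continuous_on_iff by (metis UNIV_I)
    have "dist (F (q - d / 2)) (F q) < F q - (p + S)" using d by (intro d(2)) (simp add: dist_real_def)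
    moreover have "ecdf n r (q - d / 2) < p" using d by (intro below) simp
    moreover note S[of "q - d / 2"]
    ultimately show False by (simp add: dist_real_def)
  qed
  show ?thesis unfolding qq using low up by linarith
qed

context oobset begin

lemma F_nonneg: "0 \<le> F t" unfolding F_def by (rule measure_nonneg)
lemma F_le1: "F t \<le> 1" unfolding F_def using G by (simp add: prob_space.prob_le_1)
lemma F_mono: "mono F"
proof (rule monoI)
  fix s t :: real assume "s \<le> t"
  interpret g: prob_space G by (rule G)
  have "{p\<in>space G. R p \<le> t} \<in> sets G" by measurable
  then show "F s \<le> F t" unfolding F_def R_def[symmetric] using \<open>s \<le> t\<close>
    by (intro g.finite_measure_mono) auto
qed
lemma F_neg: "t < 0 \<Longrightarrow> F t = 0"
proof -
  assume "t < 0"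
  then have "{p \<in> space G. dist (snd p) (m (fst p)) \<le> t} = {}" using zero_le_dist by (auto, smt (verit) zero_le_dist)
  then show ?thesis unfolding F_def by (simp only: measure_empty)
qed
lemma F_top: "\<exists>b>0. F b > 1 - \<eta>" if "\<eta> > 0"
proof -
  interpret g: prob_space G by (rule G)
  define A where "A k = {p\<in>space G. R p \<le> real k}" for k :: nat
  have "(\<lambda>k. measure G (A k)) \<longlonglongrightarrow> measure G (\<Union>k. A k)"
  proof (rule g.finite_Lim_measure_incseq)
    have "A k \<in> sets G" for k unfolding A_def by measurable
    then show "range A \<subseteq> sets G" by auto
    show "incseq A" unfolding A_def incseq_def by auto
  qed
  moreover have "(\<Union>k. A k) = space G" unfolding A_def using real_arch_simple by auto
  ultimately have "(\<lambda>k. F (real k)) \<longlonglongrightarrow> 1" unfolding F_def A_def R_def by (simp add: g.prob_space)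
  then have "eventually (\<lambda>k. F (real k) > 1 - \<eta>) sequentially" using that
    by (intro order_tendstoD) auto
  then obtain k where "F (real (Suc k)) > 1 - \<eta>"
    by (metis eventually_sequentially le_add2 plus_1_eq_Suc)
  then show ?thesis by (intro exI[of _ "real (Suc k)"]) auto
qed

lemma bdd_Gh: "bdd_above (range (\<lambda>t. \<bar>ecdf n r t - F t\<bar>))"
proof -
  have "\<bar>ecdf n r t - F t\<bar> \<le> 2" for t
  proof (cases "n = 0")
    case True then show ?thesis using F_nonneg[of t] F_le1[of t] by (simp add: ecdf_def)
  next
    case False then show ?thesis using ecdf_01[of n r t] F_nonneg[of t] F_le1[of t] by (simp add: abs_le_iff)
  qed
  then show ?thesis by (intro bdd_aboveI[where M=2]) auto
qed

lemma smallp_sup: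
  fixes \<eta> :: real
  assumes eta: "0 < \<eta>"
  shows "smallp (\<lambda>n \<omega>. \<bar>SUP t. \<bar>ecdf n (oob_res base agg B n \<omega>) t - F t\<bar>\<bar> > \<eta>)"
proof -
  obtain b where b: "b > 0" "F b > 1 - \<eta> / 4" using F_top[of "\<eta> / 4"] eta by auto
  have "uniformly_continuous_on {-1..b} F"
    using F_cont by (intro compact_uniformly_continuous) (auto intro: continuous_on_subset)
  then obtain d where d: "d > 0" "\<And>x x'. x \<in> {-1..b} \<Longrightarrow> x' \<in> {-1..b} \<Longrightarrow> dist x' x < d \<Longrightarrow> dist (F x') (F x) < \<eta> / 4"
    unfolding uniformly_continuous_on_def using eta by (metis divide_pos_pos zero_less_numeral)
  define K where "K = nat \<lceil>(b + 1) / d\<rceil> + 1"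
  define h where "h = (b + 1) / K"
  have K: "K > 0" unfolding K_def by simp
  have "(b + 1) / d < K" unfolding K_def by linarith
  then have hd: "h < d" unfolding h_def using d(1) K by (simp add: field_simps)
  have uc: "F y - F x < \<eta> / 4" if "-1 \<le> x" "y \<le> b" "x \<le> y" "y - x \<le> h" for x y
  proof -
    have "dist (F y) (F x) < \<eta> / 4" using that hd b by (intro d(2)) (auto simp: dist_real_def)
    then show ?thesis unfolding dist_real_def by linarith
  qed
  define S where "S = (\<lambda>j. -1 + real j * h) ` {..K}"
  have "smallp (\<lambda>n \<omega>. \<exists>s\<in>S. \<bar>ecdf n (oob_res base agg B n \<omega>) s - F s\<bar> > \<eta> / 4)"
    unfolding S_def using eta by (intro smallp_finite_ex smallp_Gh) auto
  then show ?thesis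
  proof (rule smallp_mono)
    show "eventually (\<lambda>n. \<forall>\<omega>\<in>space (P n). \<bar>SUP t. \<bar>ecdf n (oob_res base agg B n \<omega>) t - F t\<bar>\<bar> > \<eta> \<longrightarrow>
        (\<exists>s\<in>S. \<bar>ecdf n (oob_res base agg B n \<omega>) s - F s\<bar> > \<eta> / 4)) sequentially"
      using eventually_gt_at_top[of 0]
    proof eventually_elim
      case (elim n)
      show ?case
      proof (intro ballI impI, rule ccontr)
        fix \<omega> assume gt: "\<bar>SUP t. \<bar>ecdf n (oob_res base agg B n \<omega>) t - F t\<bar>\<bar> > \<eta>"
          and no: "\<not> (\<exists>s\<in>S. \<bar>ecdf n (oob_res base agg B n \<omega>) s - F s\<bar> > \<eta> / 4)"
        let ?g = "ecdf n (oob_res base agg B n \<omega>)"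
        have all: "\<bar>?g t - F t\<bar> \<le> \<eta> / 2" for t
        proof (rule grid_bound[OF F_mono ecdf_mono])
          show "0 \<le> ?g t \<and> ?g t \<le> 1" for t using elim by (rule ecdf_01)
          show "0 \<le> F t \<and> F t \<le> 1" for t using F_nonneg F_le1 by auto
          show "F (-1) = 0" by (rule F_neg) simp
          show "\<bar>?g (-1 + real j * h) - F (-1 + real j * h)\<bar> \<le> \<eta> / 4" if "j \<le> K" for j
            using no that unfolding S_def by force
        qed (use b K uc h_def in auto)
        have "(SUP t. \<bar>?g t - F t\<bar>) \<le> \<eta> / 2" using all by (intro cSUP_least) auto
        moreover have "0 \<le> (SUP t. \<bar>?g t - F t\<bar>)"
          using cSUP_upper[OF UNIV_I bdd_Gh, of n "oob_res base agg B n \<omega>" 0] by linarith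
        ultimately show False using gt eta by linarith
      qed
    qed
  qed
qed

theorem main:
  "to_zero_in_prob P (\<lambda>n \<omega>. SUP t::real. \<bar>ecdf n (oob_res base agg B n \<omega>) t - F t\<bar>)
   \<and> (\<forall>\<alpha>::real. 0 < \<alpha> \<and> \<alpha> < 1 \<longrightarrow>
        to_zero_in_prob P (\<lambda>n \<omega>. F (quantile (ecdf n (oob_res base agg B n \<omega>)) (1 - \<alpha>)) - (1 - \<alpha>)))"
proof (intro conjI allI impI)
  show "to_zero_in_prob P (\<lambda>n \<omega>. SUP t::real. \<bar>ecdf n (oob_res base agg B n \<omega>) t - F t\<bar>)"
    by (intro smallp_to_zero smallp_sup)
  fix \<alpha> :: real assume a: "0 < \<alpha> \<and> \<alpha> < 1"
  show "to_zero_in_prob P (\<lambda>n \<omega>. F (quantile (ecdf n (oob_res base agg B n \<omega>)) (1 - \<alpha>)) - (1 - \<alpha>))"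
  proof (rule smallp_to_zero)
    fix \<eta> :: real assume eta: "\<eta> > 0"
    show "smallp (\<lambda>n \<omega>. \<bar>F (quantile (ecdf n (oob_res base agg B n \<omega>)) (1 - \<alpha>)) - (1 - \<alpha>)\<bar> > \<eta>)"
      using smallp_sup[OF eta]
    proof (rule smallp_mono)
      show "eventually (\<lambda>n. \<forall>\<omega>\<in>space (P n). \<bar>F (quantile (ecdf n (oob_res base agg B n \<omega>)) (1 - \<alpha>)) - (1 - \<alpha>)\<bar> > \<eta> \<longrightarrow>
          \<bar>SUP t. \<bar>ecdf n (oob_res base agg B n \<omega>) t - F t\<bar>\<bar> > \<eta>) sequentially"
        using eventually_gt_at_top[of 0]
      proof eventually_elim
        case (elim n)
        show ?case
        proof (intro ballI impI)
          fix \<omega> assume gt: "\<bar>F (quantile (ecdf n (oob_res base agg B n \<omega>)) (1 - \<alpha>)) - (1 - \<alpha>)\<bar> > \<eta>"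
          let ?S = "SUP t. \<bar>ecdf n (oob_res base agg B n \<omega>) t - F t\<bar>"
          have "\<bar>F (quantile (ecdf n (oob_res base agg B n \<omega>)) (1 - \<alpha>)) - (1 - \<alpha>)\<bar> \<le> ?S"
          proof (rule quantile_bound[OF elim _ _ _ F_cont])
            show "0 \<le> oob_res base agg B n \<omega> i" for i unfolding oob_res_def by simp
            show "\<bar>ecdf n (oob_res base agg B n \<omega>) t - F t\<bar> \<le> ?S" for t
              by (rule cSUP_upper[OF UNIV_I bdd_Gh])
          qed (use a in auto)
          then show "\<bar>?S\<bar> > \<eta>" using gt by linarith
        qed
      qed
    qed
  qed
qed

end

theorem lemma1:
  fixes G :: "('x::metric_space \<times> 'y::metric_space) measure"
    and m :: "'x \<Rightarrow> 'y"
    and B :: "nat \<Rightarrow> nat"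
    and rs :: "nat \<Rightarrow> nat list pmf"
    and \<Theta> :: "nat \<Rightarrow> 't measure"
    and base :: "nat \<Rightarrow> ('x \<times> 'y) list \<Rightarrow> 't \<Rightarrow> 'e"
    and agg :: "nat \<Rightarrow> 'e list \<Rightarrow> 'x \<Rightarrow> 'y"
    and F\<^sub>R :: "real \<Rightarrow> real"
  assumes G: "prob_space G" "sets G = sets (borel \<Otimes>\<^sub>M borel)"
    and m: "cond_frechet_mean G m"
    and Theta: "\<And>n. prob_space (\<Theta> n)"
    and rs_range: "\<And>n. set_pmf (rs n) \<subseteq> lists {..<n}"
    and rs_exch: "\<And>n \<pi>. bij_betw \<pi> {..<n} {..<n} \<Longrightarrow> map_pmf (map \<pi>) (rs n) = rs n"
    and R_meas: "(\<lambda>p. dist (snd p) (m (fst p))) \<in> borel_measurable G"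
    and F\<^sub>R_def: "\<And>t. F\<^sub>R t = measure G {p \<in> space G. dist (snd p) (m (fst p)) \<le> t}"
    and F\<^sub>R_cont: "continuous_on UNIV F\<^sub>R"
    and oob_meas: "\<And>n i. i < n \<Longrightarrow>
          (\<lambda>\<omega>. oob_res base agg B n \<omega> i) \<in> borel_measurable (bag_space G B rs \<Theta> n)"
    and dist_meas: "\<And>n i. i < n \<Longrightarrow>
          (\<lambda>\<omega>. dist (m (fst (fst \<omega> i))) (oob base agg B n \<omega> i (fst (fst \<omega> i))))
            \<in> borel_measurable (bag_space G B rs \<Theta> n)"
    and consistent: "to_zero_in_prob (bag_space G B rs \<Theta>)
          (\<lambda>n \<omega>. dist (m (fst (fst \<omega> 0))) (oob base agg B n \<omega> 0 (fst (fst \<omega> 0))))"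
  shows "to_zero_in_prob (bag_space G B rs \<Theta>)
           (\<lambda>n \<omega>. SUP t::real. \<bar>ecdf n (oob_res base agg B n \<omega>) t - F\<^sub>R t\<bar>)
         \<and> (\<forall>\<alpha>::real. 0 < \<alpha> \<and> \<alpha> < 1 \<longrightarrow>
              to_zero_in_prob (bag_space G B rs \<Theta>)
                (\<lambda>n \<omega>. F\<^sub>R (quantile (ecdf n (oob_res base agg B n \<omega>)) (1 - \<alpha>)) - (1 - \<alpha>)))"
  proof -
  interpret oobset G m B rs \<Theta> base agg F\<^sub>R
    by (rule oobset.intro[OF G(1) Theta rs_exch R_meas F\<^sub>R_def F\<^sub>R_cont dist_meas consistent])
  show ?thesis using main .
qed

end
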